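(* Let $n\ge 2$. The number of distinct diagonals $(F_{0,0},F_{1,1},\dots,F_{2n-3,2n-3})$ occurring among the $\mathbf{F}$-matrices of fully heterochronous ranked tree shapes with $n$ leaves equals the Catalan number $C_{n-1}=\frac1n\binom{2n-2}{n-1}$.
   Context: A fully heterochronous ranked tree shape with $n$ leaves is a rooted full binary tree (every node has out-degree $0$ or $2$), without leaf labels, with $n$ leaves, together with a total ordering of all $2n-1$ nodes (leaves included) such that nodes appear in increasing order along every path from the root to a leaf; the position of a node in this order, numbered $0,\dots,2n-2$, is its rank. Its $\mathbf{F}$-matrix is the $(2n-2)\times(2n-2)$ lower triangular matrix $F$, indices from $0$ to $2n-3$, where for $0\le j\le i$ the entry $F_{i,j}$ is the number of edges from a parent node $v$ to a child node $w$ with rank of $v$ at most $j$ and rank of $w$ larger than $i$. *)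

theory Defs
  imports Complex_Main
begin

text \<open>A fully heterochronous ranked tree shape with n leaves is represented by identifying
  each node with its rank in 0..2n-2; the tree structure is then given by the parent map
  p, where p w is the rank of the parent of the non-root node w (1 \<le> w \<le> 2n-2).
  Rank 0 is the root.\<close>

definition children :: "nat \<Rightarrow> (nat \<Rightarrow> nat) \<Rightarrow> nat \<Rightarrow> nat set" where
  "children n p v = {w. 1 \<le> w \<and> w \<le> 2*n-2 \<and> p w = v}"

definition fh_rts :: "nat \<Rightarrow> (nat \<Rightarrow> nat) \<Rightarrow> bool" where
  "fh_rts n p \<longleftrightarrow>
     (\<forall>w. 1 \<le> w \<and> w \<le> 2*n-2 \<longrightarrow> p w < w) \<and>
     (\<forall>v \<le> 2*n-2. card (children n p v) = 0 \<or> card (children n p v) = 2) \<and>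
     card {v. v \<le> 2*n-2 \<and> children n p v = {}} = n"

definition Fmat :: "nat \<Rightarrow> (nat \<Rightarrow> nat) \<Rightarrow> nat \<Rightarrow> nat \<Rightarrow> nat" where
  "Fmat n p i j = card {w. 1 \<le> w \<and> w \<le> 2*n-2 \<and> p w \<le> j \<and> i < w}"

definition Fdiag :: "nat \<Rightarrow> (nat \<Rightarrow> nat) \<Rightarrow> nat list" where
  "Fdiag n p = map (\<lambda>i. Fmat n p i i) [0..<2*n-2]"

end

theory Submission
  imports Defs "HOL-Library.Multiset"
begin


fun valid :: "nat \<Rightarrow> bool list \<Rightarrow> bool" where
  "valid h [] = (h = 0)"
| "valid h (x#xs) = (if x then valid (Suc h) xs else (0 < h \<and> valid (h - 1) xs))"

definition gcount :: "nat \<Rightarrow> nat \<Rightarrow> nat" where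
  "gcount k h = card {xs. length xs = k \<and> valid h xs}"

lemma fin_len: "finite {xs::bool list. length xs = k \<and> P xs}"
proof -
  have "finite {xs::bool list. set xs \<subseteq> UNIV \<and> length xs = k}"
    by (rule finite_lists_length_eq) simp
  then show ?thesis by (rule rev_finite_subset) auto
qed

lemma valid_len: "valid h xs \<Longrightarrow> h \<le> length xs"
proof (induction xs arbitrary: h)
  case Nil then show ?case by simp
next
  case (Cons x xs)
  show ?case
  proof (cases x)
    case True then show ?thesis using Cons.IH[of "Suc h"] Cons.prems by simp
  next
    case False then show ?thesis using Cons.IH[of "h - 1"] Cons.prems by simp
  qed
qed

lemma gz: "k < h \<Longrightarrow> gcount k h = 0"
  proof -
  assume "k < h"
  then have "{xs. length xs = k \<and> valid h xs} = {}" using valid_len by fastforce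
  then show ?thesis unfolding gcount_def by (metis card.empty)
qed

lemma g0: "gcount 0 h = (if h = 0 then 1 else 0)"
proof -
  have "{xs::bool list. length xs = 0 \<and> valid h xs} = (if h = 0 then {[]} else {})" by auto
  then show ?thesis unfolding gcount_def by simp
qed

lemma grec: "gcount (Suc k) h = gcount k (Suc h) + (if 0 < h then gcount k (h - 1) else 0)"
proof -
  let ?A = "{xs. length xs = k \<and> valid (Suc h) xs}"
  let ?B = "{xs. length xs = k \<and> 0 < h \<and> valid (h - 1) xs}"
  have e: "{xs. length xs = Suc k \<and> valid h xs} = Cons True ` ?A \<union> Cons False ` ?B"
  proof (rule set_eqI)
    fix xs show "xs \<in> {xs. length xs = Suc k \<and> valid h xs} \<longleftrightarrow> xs \<in> Cons True ` ?A \<union> Cons False ` ?B"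
      by (cases xs) auto
  qed
  have "card (Cons True ` ?A \<union> Cons False ` ?B) = card (Cons True ` ?A) + card (Cons False ` ?B)"
    by (rule card_Un_disjoint) (auto intro: finite_imageI fin_len)
  also have "\<dots> = card ?A + card ?B" by (simp add: card_image)
  also have "card ?B = (if 0 < h then gcount k (h - 1) else 0)" unfolding gcount_def by auto
  finally show ?thesis using e unfolding gcount_def by simp
qed

definition bi :: "nat \<Rightarrow> int \<Rightarrow> int" where
  "bi k j = (if j < 0 then 0 else int (k choose nat j))"

lemma bi_pascal: "bi (Suc k) j = bi k j + bi k (j - 1)"
proof (cases "j \<le> 0")
  case True then show ?thesis unfolding bi_def by auto
next
  case False
  then obtain i where j: "j = int (Suc i)" by (metis gr0_implies_Suc not_le zero_less_imp_eq_int)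
  then have "nat j = Suc i" "nat (j - 1) = i" "\<not> j < 0" "\<not> j - 1 < 0" by auto
  then show ?thesis unfolding bi_def by simp
qed

lemma gdiag: "gcount h h = 1"
  by (induction h) (auto simp: g0 grec gz)

lemma gformula: "int (gcount (2*u+h) h) = bi (2*u+h) (int u) - bi (2*u+h) (int u - 1)"
proof (induction u arbitrary: h)
  case 0
  then show ?case by (simp add: gdiag bi_def)
next
  case (Suc u)
  note outer = Suc.IH
  show ?case
  proof (induction h)
    case 0
    have "gcount (2 * Suc u + 0) 0 = gcount (2*u + 1) 1"
      by (simp add: grec)
    then have "int (gcount (2 * Suc u + 0) 0) = bi (2*u+1) (int u) - bi (2*u+1) (int u - 1)"
      using outer[of 1] by simp
    moreover have "bi (2*u+1) (1 + int u) = bi (2*u+1) (int u)"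
    proof -
      have "(2*u+1) choose (u+1) = (2*u+1) choose u"
        using binomial_symmetric[of "u+1" "2*u+1"] by simp
      then show ?thesis unfolding bi_def by (simp add: nat_add_distrib)
    qed
    moreover have "bi (Suc (Suc (2*u))) (1 + int u) = bi (Suc (2*u)) (1 + int u) + bi (Suc (2*u)) (int u)"
      using bi_pascal[of "Suc (2*u)" "1 + int u"] by simp
    moreover have "bi (2 * Suc u + 0) (int (Suc u) - 1) = bi (2*u+1) (int u) + bi (2*u+1) (int u - 1)"
      using bi_pascal[of "2*u+1" "int u"] by simp
    ultimately show ?case by simp
  next
    case (Suc h)
    have "gcount (2 * Suc u + Suc h) (Suc h) = gcount (2*u + Suc (Suc h)) (Suc (Suc h)) + gcount (2 * Suc u + h) h"
      by (simp add: grec)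
    then have "int (gcount (2 * Suc u + Suc h) (Suc h)) =
      (bi (2*u + Suc (Suc h)) (int u) - bi (2*u + Suc (Suc h)) (int u - 1))
      + (bi (2 * Suc u + h) (int (Suc u)) - bi (2 * Suc u + h) (int (Suc u) - 1))"
      using outer[of "Suc (Suc h)"] Suc.IH by simp
    moreover have "bi (2 * Suc u + Suc h) (int (Suc u)) = bi (2 * Suc u + h) (int (Suc u)) + bi (2 * Suc u + h) (int u)"
      using bi_pascal[of "2 * Suc u + h" "int (Suc u)"] by simp
    moreover have "bi (2 * Suc u + Suc h) (int (Suc u) - 1) = bi (2 * Suc u + h) (int u) + bi (2 * Suc u + h) (int u - 1)"
      using bi_pascal[of "2 * Suc u + h" "int u"] by simp
    moreover have "2*u + Suc (Suc h) = 2 * Suc u + h" by simp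
    ultimately show ?case by simp
  qed
qed

lemma catalan_count:
  assumes "m \<ge> 1"
  shows "real (gcount (2*m) 0) = (1 / real (m+1)) * real ((2*m) choose m)"
proof -
  have g: "int (gcount (2*m) 0) = int ((2*m) choose m) - int ((2*m) choose (m-1))"
    using gformula[of m 0] assms by (simp add: bi_def nat_diff_distrib)
  have a: "m * ((2*m) choose m) = (2*m) * ((2*m - 1) choose (m - 1))"
    using times_binomial_minus1_eq[of m "2*m"] assms by simp
  have b: "Suc m * ((2*m) choose Suc m) = (2*m) * ((2*m - 1) choose m)"
    using binomial_absorption[of m "2*m"] by simp
  have c: "(2*m - 1) choose m = (2*m - 1) choose (m - 1)"
    using binomial_symmetric[of m "2*m-1"] assms by (simp add: numeral_2_eq_2)
  have d: "(2*m) choose Suc m = (2*m) choose (m - 1)"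
    using binomial_symmetric[of "Suc m" "2*m"] assms by (simp add: numeral_2_eq_2)
  have e: "real m * real ((2*m) choose m) = real (Suc m) * real ((2*m) choose (m-1))"
    using a b c d by (metis of_nat_mult)
  have "real (gcount (2*m) 0) = real ((2*m) choose m) - real ((2*m) choose (m-1))"
    using g by (metis of_int_diff of_int_of_nat_eq)
  moreover have "(real ((2*m) choose m) - real ((2*m) choose (m-1))) * real (Suc m) = real ((2*m) choose m)"
    using e by (simp add: algebra_simps)
  ultimately have "real (gcount (2*m) 0) * real (Suc m) = real ((2*m) choose m)" by simp
  then have "real (gcount (2*m) 0) = real ((2*m) choose m) / real (Suc m)"
    by (simp add: eq_divide_eq del: of_nat_Suc)
  then show ?thesis by simp
qed



definition stp :: "nat \<Rightarrow> bool \<Rightarrow> nat" where "stp h x = (if x then Suc h else h - 1)"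

fun hts :: "nat \<Rightarrow> bool list \<Rightarrow> nat list" where
  "hts h [] = []"
| "hts h (x#xs) = stp h x # hts (stp h x) xs"

lemma hts_length[simp]: "length (hts h xs) = length xs"
  by (induction xs arbitrary: h) auto

lemma hts_nth: "i < length xs \<Longrightarrow> hts h xs ! i = foldl stp h (take (Suc i) xs)"
proof (induction xs arbitrary: h i)
  case Nil then show ?case by simp
next
  case (Cons x xs) then show ?case by (cases i) auto
qed

lemma hts_inj: "hts h xs = hts h ys \<Longrightarrow> xs = ys"
proof (induction xs arbitrary: ys h)
  case Nil then show ?case by (cases ys) auto
next
  case (Cons x xs)
  then obtain y ys' where ys: "ys = y # ys'" by (cases ys) auto
  with Cons.prems have "stp h x = stp h y" by simp
  then have "x = y" unfolding stp_def by (auto split: if_splits)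
  with Cons ys show ?case by auto
qed

lemma valid_iff: "valid h xs \<longleftrightarrow> (0 \<notin> set (hts (Suc h) xs) \<and> (if xs = [] then h = 0 else last (hts (Suc h) xs) = 1))"
proof (induction xs arbitrary: h)
  case Nil then show ?case by simp
next
  case (Cons x xs)
  show ?case
  proof (cases x)
    case True
    then show ?thesis using Cons.IH[of "Suc h"] by (cases xs) (auto simp: stp_def)
  next
    case False
    show ?thesis
    proof (cases h)
      case 0 then show ?thesis using False by (simp add: stp_def)
    next
      case (Suc h') then show ?thesis using False Cons.IH[of h'] by (cases xs) (auto simp: stp_def)
    qed
  qed
qed

fun ok :: "nat \<Rightarrow> bool list \<Rightarrow> bool" where
  "ok q [] = (q = 0)"
| "ok q (x#t) = (1 \<le> q \<and> ok (if x then Suc q else q - 1) t)"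

lemma ok_valid: "ok (Suc h) (t @ [False]) \<longleftrightarrow> valid h t"
proof (induction t arbitrary: h)
  case Nil then show ?case by simp
next
  case (Cons x t)
  show ?case
  proof (cases x)
    case True then show ?thesis using Cons.IH[of "Suc h"] by simp
  next
    case False
    show ?thesis
    proof (cases h)
      case 0 then show ?thesis using False by (cases t) auto
    next
      case (Suc h') then show ?thesis using False Cons.IH[of h'] by simp
    qed
  qed
qed

lemma valid_count: "valid h t \<Longrightarrow> length t = 2 * length (filter id t) + h"
proof (induction t arbitrary: h)
  case Nil then show ?case by simp
next
  case (Cons x t)
  show ?case
  proof (cases x)
    case True then show ?thesis using Cons by simp
  next
    case False then show ?thesis using Cons.prems Cons.IH[of "h - 1"] by simp
  qed
qed

lemma build:
  "ok (length Q) t \<Longrightarrow> (\<forall>v\<in>set Q. v < a) \<Longrightarrow>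
   \<exists>p. (\<forall>w. a \<le> w \<and> w < a + length t \<longrightarrow> p w < w) \<and>
       (\<forall>v. card {w. a \<le> w \<and> w < a + length t \<and> p w = v} =
            count (mset Q) v + (if a \<le> v \<and> v < a + length t \<and> t ! (v - a) then 2 else 0))"
proof (induction t arbitrary: a Q)
  case Nil then show ?case by simp
next
  case (Cons x t)
  from Cons.prems(1) obtain q0 Q1 where Q: "Q = q0 # Q1" by (cases Q) auto
  define Q' where "Q' = Q1 @ (if x then [a, a] else [])"
  have "ok (length Q') t" using Cons.prems(1) Q unfolding Q'_def by auto
  moreover have "\<forall>v\<in>set Q'. v < Suc a" using Cons.prems(2) Q unfolding Q'_def by auto
  ultimately obtain p' where p1: "\<forall>w. Suc a \<le> w \<and> w < Suc a + length t \<longrightarrow> p' w < w"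
    and p2: "\<forall>v. card {w. Suc a \<le> w \<and> w < Suc a + length t \<and> p' w = v} =
            count (mset Q') v + (if Suc a \<le> v \<and> v < Suc a + length t \<and> t ! (v - Suc a) then 2 else 0)"
    using Cons.IH by blast
  define p where "p = p'(a := q0)"
  have "\<forall>w. a \<le> w \<and> w < a + length (x#t) \<longrightarrow> p w < w"
    using p1 Cons.prems(2) Q unfolding p_def by (auto simp: Suc_le_eq)
  moreover have "card {w. a \<le> w \<and> w < a + length (x#t) \<and> p w = v} =
            count (mset Q) v + (if a \<le> v \<and> v < a + length (x#t) \<and> (x#t) ! (v - a) then 2 else 0)" for v
  proof -
    have e: "{w. a \<le> w \<and> w < a + length (x#t) \<and> p w = v} =
      (if q0 = v then {a} else {}) \<union> {w. Suc a \<le> w \<and> w < Suc a + length t \<and> p' w = v}"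
      unfolding p_def by (auto simp: Suc_le_eq)
    have "card {w. a \<le> w \<and> w < a + length (x#t) \<and> p w = v} =
      (if q0 = v then 1 else 0) + card {w. Suc a \<le> w \<and> w < Suc a + length t \<and> p' w = v}"
      unfolding e by (subst card_Un_disjoint) auto
    also have "\<dots> = (if q0 = v then 1 else 0) + count (mset Q1) v + (if x \<and> v = a then 2 else 0)
       + (if Suc a \<le> v \<and> v < Suc a + length t \<and> t ! (v - Suc a) then 2 else 0)"
      using p2 unfolding Q'_def by auto
    also have "\<dots> = count (mset Q) v + (if a \<le> v \<and> v < a + length (x#t) \<and> (x#t) ! (v - a) then 2 else 0)"
    proof (cases "v = a")
      case True then show ?thesis using Q by auto
    next
      case False
      then have "(a \<le> v) = (Suc a \<le> v)" by auto
      moreover have "Suc a \<le> v \<Longrightarrow> (x#t) ! (v - a) = t ! (v - Suc a)"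
        by (metis Suc_diff_le diff_Suc_Suc nth_Cons_Suc)
      ultimately show ?thesis using Q False by auto
    qed
    finally show ?thesis .
  qed
  ultimately show ?case by blast
qed

lemma children_fin: "finite (children n p v)"
  unfolding children_def by (rule finite_subset[of _ "{..2*n-2}"]) auto

lemma Frec:
  assumes par: "\<forall>w. 1 \<le> w \<and> w \<le> 2*n-2 \<longrightarrow> p w < w"
    and deg: "\<forall>v \<le> 2*n-2. card (children n p v) = 0 \<or> card (children n p v) = 2"
  shows "i < 2*n-2 \<Longrightarrow> Fmat n p i i = foldl stp 1 (map (\<lambda>j. children n p j \<noteq> {}) [0..<Suc i])"
proof (induction i)
  case 0
  have "{w. 1 \<le> w \<and> w \<le> 2*n-2 \<and> p w \<le> 0 \<and> 0 < w} = children n p 0"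
    unfolding children_def by auto
  then have f: "Fmat n p 0 0 = card (children n p 0)" unfolding Fmat_def by simp
  show ?case
  proof (cases "card (children n p 0) = 0")
    case True
    then have "children n p 0 = {}" by (meson card_0_eq children_fin)
    then show ?thesis using f True by (simp add: stp_def)
  next
    case False
    then have "card (children n p 0) = 2" using deg by auto
    moreover then have "children n p 0 \<noteq> {}" by auto
    ultimately show ?thesis using f by (simp add: stp_def)
  qed
next
  case (Suc i)
  define E where "E i = {w. 1 \<le> w \<and> w \<le> 2*n-2 \<and> p w \<le> i \<and> i < w}" for i
  have finE: "finite (E j)" for j unfolding E_def by (rule finite_subset[of _ "{..2*n-2}"]) auto
  have "p (Suc i) < Suc i" using par Suc.prems by simp
  then have mem: "Suc i \<in> E i" unfolding E_def using Suc.prems by simp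
  have eq: "E (Suc i) = (E i - {Suc i}) \<union> children n p (Suc i)"
    unfolding E_def children_def using par by (auto simp: less_Suc_eq_le)
  have "card (E (Suc i)) = card (E i - {Suc i}) + card (children n p (Suc i))"
    unfolding eq by (rule card_Un_disjoint) (auto simp: finE children_fin E_def children_def)
  also have "card (E i - {Suc i}) = card (E i) - 1" using mem finE by simp
  finally have c: "card (E (Suc i)) = card (E i) - 1 + card (children n p (Suc i))" .
  have pos: "card (E i) \<ge> 1" using mem finE by (metis One_nat_def Suc_leI card_gt_0_iff empty_iff)
  have IH: "card (E i) = foldl stp 1 (map (\<lambda>j. children n p j \<noteq> {}) [0..<Suc i])"
    using Suc.IH Suc.prems unfolding Fmat_def E_def by simp
  have "foldl stp 1 (map (\<lambda>j. children n p j \<noteq> {}) [0..<Suc (Suc i)])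
      = stp (card (E i)) (children n p (Suc i) \<noteq> {})" using IH by simp
  also have "\<dots> = card (E (Suc i))"
  proof (cases "card (children n p (Suc i)) = 0")
    case True
    then have "children n p (Suc i) = {}" by (meson card_0_eq children_fin)
    then show ?thesis using c True by (simp add: stp_def)
  next
    case False
    have "Suc i \<le> 2*n-2" using Suc.prems by simp
    then have "card (children n p (Suc i)) = 0 \<or> card (children n p (Suc i)) = 2" using deg by simp
    with False have "card (children n p (Suc i)) = 2" by simp
    moreover then have "children n p (Suc i) \<noteq> {}" by auto
    ultimately show ?thesis using c pos by (simp add: stp_def)
  qed
  finally show ?case unfolding Fmat_def E_def by simp
qed

lemma Fdiag_hts:
  assumes par: "\<forall>w. 1 \<le> w \<and> w \<le> 2*n-2 \<longrightarrow> p w < w"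
    and deg: "\<forall>v \<le> 2*n-2. card (children n p v) = 0 \<or> card (children n p v) = 2"
  shows "Fdiag n p = hts 1 (map (\<lambda>j. children n p j \<noteq> {}) [0..<2*n-2])"
proof (rule nth_equalityI)
  show "length (Fdiag n p) = length (hts 1 (map (\<lambda>j. children n p j \<noteq> {}) [0..<2*n-2]))"
    unfolding Fdiag_def by simp
  fix i assume "i < length (Fdiag n p)"
  then have i: "i < 2*n-2" unfolding Fdiag_def by simp
  have "Fdiag n p ! i = Fmat n p i i" unfolding Fdiag_def using i by simp
  also have "\<dots> = foldl stp 1 (map (\<lambda>j. children n p j \<noteq> {}) [0..<Suc i])" using Frec[OF par deg i] .
  also have "\<dots> = hts 1 (map (\<lambda>j. children n p j \<noteq> {}) [0..<2*n-2]) ! i"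
    using i by (simp add: hts_nth take_map min_def)
  finally show "Fdiag n p ! i = hts 1 (map (\<lambda>j. children n p j \<noteq> {}) [0..<2*n-2]) ! i" .
qed

lemma forward:
  assumes n: "n \<ge> 2" and fh: "fh_rts n p"
  shows "Fdiag n p \<in> hts 1 ` {s. length s = 2*n-2 \<and> valid 0 s}"
proof -
  have par: "\<forall>w. 1 \<le> w \<and> w \<le> 2*n-2 \<longrightarrow> p w < w"
    and deg: "\<forall>v \<le> 2*n-2. card (children n p v) = 0 \<or> card (children n p v) = 2"
    using fh unfolding fh_rts_def by auto
  define s where "s = map (\<lambda>j. children n p j \<noteq> {}) [0..<2*n-2]"
  have fd: "Fdiag n p = hts 1 s" unfolding s_def by (rule Fdiag_hts[OF par deg])
  have pos: "Fmat n p i i \<ge> 1" if "i < 2*n-2" for i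
  proof -
    have "p (Suc i) < Suc i" using par that by simp
    then have "Suc i \<in> {w. 1 \<le> w \<and> w \<le> 2*n-2 \<and> p w \<le> i \<and> i < w}"
      using that by simp
    moreover have "finite {w. 1 \<le> w \<and> w \<le> 2*n-2 \<and> p w \<le> i \<and> i < w}"
      by (rule finite_subset[of _ "{..2*n-2}"]) auto
    ultimately show ?thesis unfolding Fmat_def
      by (metis One_nat_def Suc_leI card_gt_0_iff empty_iff)
  qed
  have lastF: "Fmat n p (2*n-3) (2*n-3) = 1"
  proof -
    have "p (2*n-2) < 2*n-2" using par n by simp
    then have "{w. 1 \<le> w \<and> w \<le> 2*n-2 \<and> p w \<le> 2*n-3 \<and> 2*n-3 < w} = {2*n-2}"
      using n by auto
    then show ?thesis unfolding Fmat_def by simp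
  qed
  have "0 \<notin> set (Fdiag n p)" unfolding Fdiag_def using pos by fastforce
  moreover have "s \<noteq> []" unfolding s_def using n by simp
  moreover have "last (Fdiag n p) = 1"
  proof -
    have e: "2*n-2 = Suc (2*n-3)" using n by simp
    have "[0..<2*n-2] = [0..<2*n-3] @ [2*n-3]" unfolding e by simp
    then show ?thesis unfolding Fdiag_def using lastF by simp
  qed
  ultimately have "valid 0 s" using valid_iff[of 0 s] fd by simp
  moreover have "length s = 2*n-2" unfolding s_def by simp
  ultimately show ?thesis using fd by blast
qed

lemma backward:
  assumes n: "n \<ge> 2" and s: "length s = 2*n-2" "valid 0 s"
  shows "\<exists>p. fh_rts n p \<and> Fdiag n p = hts 1 s"
proof -
  define N where "N = 2*n-2"
  have N2: "N \<ge> 2" unfolding N_def using n by simp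
  obtain x s1 where sx: "s = x # s1" using s N2 unfolding N_def by (cases s) auto
  have x: "x" and v1: "valid 1 s1" using s(2) sx by (auto split: if_splits)
  define t where "t = s1 @ [False]"
  have lt: "length t = N" using s sx unfolding t_def N_def by simp
  have "ok (length [0::nat,0]) t" using ok_valid[of 1 s1] v1 unfolding t_def by (simp add: numeral_2_eq_2)
  moreover have "\<forall>v\<in>set [0::nat,0]. v < 1" by simp
  ultimately obtain p where p1: "\<forall>w. 1 \<le> w \<and> w < 1 + length t \<longrightarrow> p w < w"
    and p2: "\<forall>v. card {w. 1 \<le> w \<and> w < 1 + length t \<and> p w = v} =
            count (mset [0::nat,0]) v + (if 1 \<le> v \<and> v < 1 + length t \<and> t ! (v - 1) then 2 else 0)"
    using build by blast
  have ch: "children n p v = {w. 1 \<le> w \<and> w < 1 + length t \<and> p w = v}" for v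
    unfolding children_def lt N_def by auto
  have cc: "card (children n p v) = (if v < N \<and> s ! v then 2 else 0)" for v
  proof (cases "v = 0")
    case True then show ?thesis using p2 ch sx x N2 by simp
  next
    case False
    have "(1 \<le> v \<and> v < 1 + length t \<and> t ! (v - 1)) = (v < N \<and> s ! v)"
    proof (cases "v < N")
      case True
      then have "v - 1 < length s1" using sx s False unfolding N_def by auto
      then have "t ! (v - 1) = s1 ! (v - 1)" unfolding t_def by (simp add: nth_append)
      also have "\<dots> = s ! v" using sx False by (cases v) auto
      finally show ?thesis using True False lt by auto
    next
      case F2: False
      show ?thesis
      proof (cases "v = N")
        case True
        then have "v - 1 = length s1" using sx s unfolding N_def by auto
        then have "\<not> t ! (v - 1)" unfolding t_def by simp
        then show ?thesis using F2 by auto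
      next
        case False then show ?thesis using F2 lt by auto
      qed
    qed
    then show ?thesis using p2 ch False by simp
  qed
  have par: "\<forall>w. 1 \<le> w \<and> w \<le> 2*n-2 \<longrightarrow> p w < w" using p1 lt unfolding N_def by auto
  have deg: "\<forall>v \<le> 2*n-2. card (children n p v) = 0 \<or> card (children n p v) = 2" using cc by simp
  have emp: "children n p v = {} \<longleftrightarrow> \<not> (v < N \<and> s ! v)" for v
    using cc[of v] children_fin[of n p v] by (metis card_0_eq zero_neq_numeral)
  have "{v. v \<le> 2*n-2 \<and> children n p v = {}} = {..N} - {v. v < N \<and> s ! v}"
    using emp unfolding N_def by auto
  moreover have "card {v. v < N \<and> s ! v} = length (filter id s)"
    using length_filter_conv_card[of id s] s unfolding N_def by simp
  moreover have "length (filter id s) = n - 1" using valid_count[OF s(2)] s by simp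
  moreover have "{v. v < N \<and> s ! v} \<subseteq> {..N}" by auto
  ultimately have "card {v. v \<le> 2*n-2 \<and> children n p v = {}} = Suc N - (n - 1)"
    by (simp add: card_Diff_subset)
  also have "\<dots> = n" unfolding N_def using n by simp
  finally have lv: "card {v. v \<le> 2*n-2 \<and> children n p v = {}} = n" .
  have fh: "fh_rts n p" unfolding fh_rts_def using par deg lv by blast
  have "map (\<lambda>j. children n p j \<noteq> {}) [0..<2*n-2] = map (\<lambda>j. s ! j) [0..<length s]"
    using emp s unfolding N_def by simp
  also have "\<dots> = s" by (rule map_nth)
  finally have "Fdiag n p = hts 1 s" using Fdiag_hts[OF par deg] by simp
  with fh show ?thesis by blast
qed

theorem proposition3:
  fixes n :: nat
  assumes "n \<ge> 2"
  shows "real (card {Fdiag n p | p. fh_rts n p}) = (1 / real n) * real ((2*n-2) choose (n-1))"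
proof -
  let ?D = "{s. length s = 2*n-2 \<and> valid 0 s}"
  have "{Fdiag n p | p. fh_rts n p} = hts 1 ` ?D"
  proof
    show "{Fdiag n p | p. fh_rts n p} \<subseteq> hts 1 ` ?D" using forward[OF assms] by blast
    show "hts 1 ` ?D \<subseteq> {Fdiag n p | p. fh_rts n p}"
    proof
      fix y assume "y \<in> hts 1 ` ?D"
      then obtain s where "s \<in> ?D" "y = hts 1 s" by blast
      then show "y \<in> {Fdiag n p | p. fh_rts n p}" using backward[OF assms] by force
    qed
  qed
  moreover have "inj_on (hts 1) ?D" by (meson hts_inj inj_onI)
  ultimately have "card {Fdiag n p | p. fh_rts n p} = card ?D" by (simp add: card_image)
  also have "\<dots> = gcount (2*(n-1)) 0" unfolding gcount_def by (simp add: right_diff_distrib')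
  finally have "real (card {Fdiag n p | p. fh_rts n p}) = real (gcount (2*(n-1)) 0)" by simp
  also have "\<dots> = (1 / real (n - 1 + 1)) * real ((2*(n-1)) choose (n-1))"
    using catalan_count[of "n-1"] assms by simp
  also have "\<dots> = (1 / real n) * real ((2*n-2) choose (n-1))"
    using assms by (simp add: right_diff_distrib')
  finally show ?thesis .
qed

end
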